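(* Let $G$ be a group and $c\in G$. If the set $\{x\in G:x^2=c\}$ is $4$-large in $G$, then $G$ is abelian of exponent $2$, and $c=1$.
   Context: A subset $X\subseteq G$ is $k$-large in $G$ if the intersection of any $k$ left translates $g_1X\cap\dots\cap g_kX$ ($g_i\in G$) is non-empty. *)

theory Defs
  imports "HOL-Algebra.Algebra"
begin

definition k_large :: "('a, 'b) monoid_scheme \<Rightarrow> nat \<Rightarrow> 'a set \<Rightarrow> bool" where
  "k_large Gr k S \<longleftrightarrow> S \<subseteq> carrier Gr \<and>
     (\<forall>g. (\<forall>i<k. g i \<in> carrier Gr) \<longrightarrow> \<Inter> ((\<lambda>i. l_coset Gr (g i) S) ` {..<k}) \<noteq> {})"

end

theory Submission
  imports Defs
begin

lemma conj_inv:
  fixes G (structure)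
  assumes "group G" "h \<in> carrier G" "y \<in> carrier G"
    and "(h \<otimes>\<^bsub>G\<^esub> y) \<otimes>\<^bsub>G\<^esub> (h \<otimes>\<^bsub>G\<^esub> y) = y \<otimes>\<^bsub>G\<^esub> y"
  shows "inv\<^bsub>G\<^esub> y \<otimes>\<^bsub>G\<^esub> h \<otimes>\<^bsub>G\<^esub> y = inv\<^bsub>G\<^esub> h"
proof -
  interpret group G by fact
  have "(h \<otimes> y \<otimes> h) \<otimes> y = y \<otimes> y" using assms by (simp add: m_assoc)
  hence e: "h \<otimes> y \<otimes> h = y" using assms by (metis m_closed r_cancel)
  have "(inv y \<otimes> h \<otimes> y) \<otimes> h = inv y \<otimes> (h \<otimes> y \<otimes> h)" using assms by (simp add: m_assoc)
  also have "\<dots> = \<one>" using e assms by simp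
  finally have "(inv y \<otimes> h \<otimes> y) \<otimes> h = \<one>" .
  thus ?thesis using assms by (metis inv_equality m_closed inv_closed)
qed

lemma get_y:
  fixes G (structure)
  assumes "group G" "k_large G 4 {x \<in> carrier G. x \<otimes>\<^bsub>G\<^esub> x = c}"
    and "a \<in> carrier G" "b \<in> carrier G" "d \<in> carrier G"
  shows "\<exists>y\<in>carrier G. y \<otimes>\<^bsub>G\<^esub> y = c \<and>
     (a \<otimes>\<^bsub>G\<^esub> y) \<otimes>\<^bsub>G\<^esub> (a \<otimes>\<^bsub>G\<^esub> y) = c \<and>
     (b \<otimes>\<^bsub>G\<^esub> y) \<otimes>\<^bsub>G\<^esub> (b \<otimes>\<^bsub>G\<^esub> y) = c \<and>
     (d \<otimes>\<^bsub>G\<^esub> y) \<otimes>\<^bsub>G\<^esub> (d \<otimes>\<^bsub>G\<^esub> y) = c"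
proof -
  interpret group G by fact
  define S where "S = {x \<in> carrier G. x \<otimes> x = c}"
  define g where "g = (\<lambda>i::nat. if i = 0 then \<one> else if i = 1 then inv a
     else if i = 2 then inv b else inv d)"
  have gc: "\<forall>i<4. g i \<in> carrier G" using assms by (simp add: g_def)
  with assms(2) obtain y where y: "y \<in> \<Inter> ((\<lambda>i. g i <# S) ` {..<4})"
    unfolding k_large_def S_def by blast
  have mem: "\<And>i. i < 4 \<Longrightarrow> \<exists>s\<in>S. y = g i \<otimes> s"
    using y unfolding l_coset_def by blast
  obtain s0 where s0: "s0 \<in> S" "y = \<one> \<otimes> s0" using mem[of 0] by (auto simp: g_def)
  have yc: "y \<in> carrier G" "y \<otimes> y = c" using s0 by (auto simp: S_def)
  have gen: "\<And>e s. e \<in> carrier G \<Longrightarrow> s \<in> S \<Longrightarrow> y = inv e \<otimes> s \<Longrightarrow> (e \<otimes> y) \<otimes> (e \<otimes> y) = c"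
  proof -
    fix e s assume e: "e \<in> carrier G" "s \<in> S" "y = inv e \<otimes> s"
    have "e \<otimes> y = s" using e by (simp add: S_def m_assoc[symmetric])
    thus "(e \<otimes> y) \<otimes> (e \<otimes> y) = c" using e by (simp add: S_def)
  qed
  obtain s1 where "s1 \<in> S" "y = inv a \<otimes> s1" using mem[of 1] by (auto simp: g_def)
  hence 1: "(a \<otimes> y) \<otimes> (a \<otimes> y) = c" using gen assms by blast
  obtain s2 where "s2 \<in> S" "y = inv b \<otimes> s2" using mem[of 2] by (auto simp: g_def)
  hence 2: "(b \<otimes> y) \<otimes> (b \<otimes> y) = c" using gen assms by blast
  obtain s3 where "s3 \<in> S" "y = inv d \<otimes> s3" using mem[of 3] by (auto simp: g_def)
  hence 3: "(d \<otimes> y) \<otimes> (d \<otimes> y) = c" using gen assms by blast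
  show ?thesis using yc 1 2 3 by blast
qed

theorem theorem4p1:
  fixes G (structure) and c :: 'a
  assumes "group G" and "c \<in> carrier G"
    and "k_large G 4 {x \<in> carrier G. x \<otimes> x = c}"
  shows "comm_group G \<and> (\<forall>x\<in>carrier G. x \<otimes> x = \<one>) \<and> c = \<one>"
proof -
  interpret group G by fact
  have comm: "a \<otimes> b = b \<otimes> a" if ab: "a \<in> carrier G" "b \<in> carrier G" for a b
  proof -
    obtain y where y: "y \<in> carrier G" "y \<otimes> y = c" "(a \<otimes> y) \<otimes> (a \<otimes> y) = c"
      "(b \<otimes> y) \<otimes> (b \<otimes> y) = c" "((a \<otimes> b) \<otimes> y) \<otimes> ((a \<otimes> b) \<otimes> y) = c"
      using get_y[OF assms(1) assms(3) ab, of "a \<otimes> b"] ab by auto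
    have pa: "inv y \<otimes> a \<otimes> y = inv a" using conj_inv[OF assms(1) ab(1) y(1)] y by simp
    have pb: "inv y \<otimes> b \<otimes> y = inv b" using conj_inv[OF assms(1) ab(2) y(1)] y by simp
    have pab: "inv y \<otimes> (a \<otimes> b) \<otimes> y = inv (a \<otimes> b)"
      using conj_inv[OF assms(1) _ y(1), of "a \<otimes> b"] y ab by simp
    have "inv y \<otimes> (a \<otimes> b) \<otimes> y = (inv y \<otimes> a \<otimes> y) \<otimes> (inv y \<otimes> b \<otimes> y)"
    proof -
      have "y \<otimes> (inv y \<otimes> z) = z" if "z \<in> carrier G" for z
        using that y by (simp add: m_assoc[symmetric])
      thus ?thesis using ab y by (simp add: m_assoc)
    qed
    hence "inv (a \<otimes> b) = inv a \<otimes> inv b" using pa pb pab by simp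
    hence "inv (a \<otimes> b) = inv (b \<otimes> a)" using ab by (simp add: inv_mult_group)
    thus ?thesis using ab by (metis inv_inv m_closed)
  qed
  have cg: "comm_group G"
    by (rule group_comm_groupI) (auto simp: comm)
  have sq: "x \<otimes> x = \<one>" if x: "x \<in> carrier G" for x
  proof -
    obtain y where y: "y \<in> carrier G" "y \<otimes> y = c" "(x \<otimes> y) \<otimes> (x \<otimes> y) = c"
      using get_y[OF assms(1) assms(3) x x x] by auto
    have p: "inv y \<otimes> x \<otimes> y = inv x" using conj_inv[OF assms(1) x y(1)] y by simp
    have "inv y \<otimes> x \<otimes> y = x" using x y comm by (metis m_assoc inv_closed l_inv l_one)
    hence "x = inv x" using p by simp
    thus ?thesis using x by (metis r_inv)
  qed
  obtain y where "y \<in> carrier G" "y \<otimes> y = c"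
    using get_y[OF assms(1) assms(3) one_closed one_closed one_closed] by auto
  hence "c = \<one>" using sq by auto
  thus ?thesis using cg sq by auto
qed

end
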